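(* Let $K$ be a field and $s\in K$ with $s\ne0$, $s\ne\pm1$, and $s\ne t^2$ for all $t\in K$. Let $a=\begin{pmatrix}1&0\\0&s\end{pmatrix}$, $b=\begin{pmatrix}0&1\\1&0\end{pmatrix}$ and $V=Ka+Kb\subseteq M_2(K)$. Then: (i) $V$ is a maximal Mathieu subspace of $M_2(K)$; (ii) $V$ contains no nonzero nilpotent element (so it is not of the form $F(\lambda_1e_1+\lambda_2e_2)+e_1M_2e_2$ with $e_1,e_2$ nonzero idempotents summing to $I_2$, nor contained in the trace-zero matrices); (iii) if $L\supseteq K$ is a field containing a square root $\sqrt s$ of $s$, then $U=La+Lb\subseteq M_2(L)$ contains the nonzero idempotent $\frac1{1+s}(a+\sqrt s\,b)$ and hence is not a Mathieu subspace of $M_2(L)$.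
   Context: Let $\mathcal A$ be an associative algebra over a field $F$. An $F$-subspace $M\subseteq\mathcal A$ is a Mathieu subspace (MS) of $\mathcal A$ if for all $a,b,c\in\mathcal A$ such that $a^m\in M$ for all $m\ge 1$, there exists $N$ (depending on $a,b,c$) such that $ba^mc\in M$ for all $m\ge N$. A maximal MS of $\mathcal A$ is a proper MS of $\mathcal A$ that is not properly contained in any proper MS of $\mathcal A$. *)

theory Defs
  imports "HOL-Analysis.Analysis"
begin

text \<open>Square matrices over a field, as elements of the type 'a^'n^'n with
  matrix product (**), identity matrix mat 1. Note: (*) on vec is componentwise,
  so matrix powers and scalar multiples are defined explicitly.\<close>

definition msmult :: "'a::field \<Rightarrow> 'a^'n^'n \<Rightarrow> 'a^'n^'n" where
  "msmult c A = (\<chi> i j. c * A$i$j)"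

definition matpow :: "'a::field^'n^'n \<Rightarrow> nat \<Rightarrow> 'a^'n^'n" where
  "matpow A m = (((**) A) ^^ m) (mat 1)"

definition msubspace :: "('a::field^'n^'n) set \<Rightarrow> bool" where
  "msubspace M \<longleftrightarrow> 0 \<in> M \<and> (\<forall>x\<in>M. \<forall>y\<in>M. x + y \<in> M) \<and> (\<forall>c. \<forall>x\<in>M. msmult c x \<in> M)"

definition mathieu_subspace :: "('a::field^'n^'n) set \<Rightarrow> bool" where
  "mathieu_subspace M \<longleftrightarrow> msubspace M \<and>
     (\<forall>a b c. (\<forall>m\<ge>1. matpow a m \<in> M) \<longrightarrow>
        (\<exists>N. \<forall>m\<ge>N. b ** matpow a m ** c \<in> M))"

definition maximal_mathieu_subspace :: "('a::field^'n^'n) set \<Rightarrow> bool" where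
  "maximal_mathieu_subspace M \<longleftrightarrow> mathieu_subspace M \<and> M \<noteq> UNIV \<and>
     (\<forall>M'. mathieu_subspace M' \<and> M' \<noteq> UNIV \<and> M \<subseteq> M' \<longrightarrow> M' = M)"

definition mnilpotent :: "'a::field^'n^'n \<Rightarrow> bool" where
  "mnilpotent A \<longleftrightarrow> (\<exists>m. matpow A m = 0)"

definition midempotent :: "'a::field^'n^'n \<Rightarrow> bool" where
  "midempotent A \<longleftrightarrow> A ** A = A"

definition matA :: "'a::field \<Rightarrow> 'a^2^2" where
  "matA s = (\<chi> i j. if i = 1 \<and> j = 1 then 1 else if i = 2 \<and> j = 2 then s else 0)"

definition matB :: "'a::field^2^2" where
  "matB = (\<chi> i j. if i \<noteq> j then 1 else 0)"

definition span2 :: "'a::field^'n^'n \<Rightarrow> 'a^'n^'n \<Rightarrow> ('a^'n^'n) set" where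
  "span2 a b = {msmult x a + msmult y b | x y. True}"

text \<open>Entrywise image of a matrix under a map (used for a field embedding K \<rightarrow> L).\<close>
definition mmap :: "('a \<Rightarrow> 'b) \<Rightarrow> 'a^'n^'n \<Rightarrow> 'b^'n^'n" where
  "mmap f A = (\<chi> i j. f (A$i$j))"

definition field_hom :: "('a::field \<Rightarrow> 'b::field) \<Rightarrow> bool" where
  "field_hom f \<longleftrightarrow> f 1 = 1 \<and> (\<forall>x y. f (x + y) = f x + f y) \<and> (\<forall>x y. f (x * y) = f x * f y)"

end

theory Submission
  imports Defs
begin


lemma m2_eq: "(A::'a^2^2) = B \<longleftrightarrow> A$1$1 = B$1$1 \<and> A$1$2 = B$1$2 \<and> A$2$1 = B$2$1 \<and> A$2$2 = B$2$2"
  by (auto simp: vec_eq_iff forall_2)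

lemma m2_mult: "((A::'a::field^2^2) ** B)$i$j = A$i$1 * B$1$j + A$i$2 * B$2$j"
  by (simp add: matrix_matrix_mult_def sum_2)

lemma ent_simps:
  "(msmult c A)$i$j = c * A$i$j"
  "(A + B)$i$j = A$i$j + B$i$j"
  "(A - B)$i$j = A$i$j - B$i$j"
  "(0::'a::field^'n^'n)$i$j = 0"
  "(mat 1 ::'a::field^'n^'n)$i$j = (if i = j then 1 else 0)"
  "(matA s)$1$1 = 1" "(matA s)$1$2 = 0" "(matA s)$2$1 = 0" "(matA s)$2$2 = s"
  "(matB :: 'a::field^2^2)$1$1 = 0" "(matB:: 'a::field^2^2)$1$2 = 1" "(matB:: 'a::field^2^2)$2$1 = 1" "(matB:: 'a::field^2^2)$2$2 = 0"
  "(mmap f A)$i$j = f (A$i$j)"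
  by (auto simp: msmult_def matA_def matB_def mmap_def mat_def)

lemma matpow_Suc: "matpow A (Suc m) = A ** matpow A m"
  by (simp add: matpow_def)
lemma matpow_1: "matpow A 1 = A" by (simp add: matpow_def)
lemma matpow_2: "matpow A 2 = A ** A" by (simp add: matpow_def numeral_2_eq_2)

lemma matpow_0: "matpow A 0 = mat 1" by (simp add: matpow_def)

lemma matpow_zero: "m \<ge> 1 \<Longrightarrow> matpow (0::'a::field^'n^'n) m = 0"
  by (cases m) (auto simp: matpow_Suc)

lemma matpow_idem: "A ** A = A \<Longrightarrow> m \<ge> 1 \<Longrightarrow> matpow A m = A"
proof (induction m)
  case (Suc m) then show ?case
    by (cases m) (auto simp: matpow_Suc matpow_0)
qed simp

lemma span_char: "X \<in> span2 (matA t) matB \<longleftrightarrow> X$1$2 = X$2$1 \<and> X$2$2 = t * X$1$1"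
proof
  assume "X \<in> span2 (matA t) matB"
  then obtain x y where "X = msmult x (matA t) + msmult y matB" by (auto simp: span2_def)
  then show "X$1$2 = X$2$1 \<and> X$2$2 = t * X$1$1" by (simp add: ent_simps)
next
  assume h: "X$1$2 = X$2$1 \<and> X$2$2 = t * X$1$1"
  have "X = msmult (X$1$1) (matA t) + msmult (X$1$2) matB"
    using h by (simp add: m2_eq ent_simps)
  then show "X \<in> span2 (matA t) matB" by (auto simp: span2_def)
qed

lemma nonsq:
  fixes s :: "'a::field"
  assumes "\<forall>t. s \<noteq> t^2" "s * x^2 = y^2" shows "x = 0"
proof (rule ccontr)
  assume "x \<noteq> 0"
  then have "s = (y/x)^2" using assms(2) by (simp add: power_divide field_simps)
  then show False using assms(1) by blast
qed

lemma V_subspace: "msubspace (span2 (matA t) matB)"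
  by (auto simp: msubspace_def span_char ent_simps algebra_simps)

lemma V_noidem:
  fixes s :: "'a::field"
  assumes "s \<noteq> 0" "s \<noteq> 1" "\<forall>t. s \<noteq> t^2"
    and "a \<in> span2 (matA s) matB" "a ** a \<in> span2 (matA s) matB"
  shows "a = 0"
proof -
  define x where "x = a$1$1"
  define y where "y = a$1$2"
  have a21: "a$2$1 = y" and a22: "a$2$2 = s*x" using assms(4) by (auto simp: span_char x_def y_def)
  have "(a**a)$2$2 = s * (a**a)$1$1" using assms(5) by (simp add: span_char)
  then have "y*y + s*x*(s*x) = s * (x*x + y * y)"
    by (simp add: m2_mult a21 a22 flip: x_def y_def)
  then have "(s - 1) * (s * x^2 - y^2) = 0" by (simp add: algebra_simps power2_eq_square)
  then have "s * x^2 = y^2" using assms(2) by simp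
  then have x0: "x = 0" using nonsq assms(3) by blast
  then have "y = 0" using \<open>s * x^2 = y^2\<close> by simp
  then show ?thesis using x0 a21 a22 by (simp add: m2_eq x_def y_def ent_simps)
qed

lemma V_mathieu:
  fixes s :: "'a::field"
  assumes "s \<noteq> 0" "s \<noteq> 1" "\<forall>t. s \<noteq> t^2"
  shows "mathieu_subspace (span2 (matA s) matB)"
  unfolding mathieu_subspace_def
proof (intro conjI V_subspace allI impI)
  fix a b c :: "'a^2^2"
  assume h: "\<forall>m\<ge>1. matpow a m \<in> span2 (matA s) matB"
  have "a \<in> span2 (matA s) matB" using h[rule_format, of 1] matpow_1[of a] by simp
  moreover have "a ** a \<in> span2 (matA s) matB" using h[rule_format, of 2] by (simp add: matpow_2)
  ultimately have "a = 0" using V_noidem[OF assms] by blast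
  then show "\<exists>N. \<forall>m\<ge>N. b ** matpow a m ** c \<in> span2 (matA s) matB"
    by (intro exI[of _ 1]) (auto simp: matpow_zero span_char ent_simps)
qed

lemma det_matpow: "det (matpow (A::'a::field^'n^'n) m) = det A ^ m"
  by (induction m) (auto simp: matpow_Suc det_mul matpow_0)

lemma V_nonil:
  fixes s :: "'a::field"
  assumes "\<forall>t. s \<noteq> t^2" "v \<in> span2 (matA s) matB" "mnilpotent v"
  shows "v = 0"
proof -
  obtain m where "matpow v m = 0" using assms(3) by (auto simp: mnilpotent_def)
  then have "det v ^ m = 0" using det_matpow[of v m] by (simp add: det_2 ent_simps)
  then have "det v = 0" by simp
  then have "s * (v$1$1)^2 = (v$1$2)^2" using assms(2)
    by (simp add: det_2 span_char power2_eq_square algebra_simps)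
  moreover have "v$1$1 = 0" using nonsq[OF assms(1)] calculation by blast
  ultimately show ?thesis using assms(2) by (auto simp: m2_eq span_char ent_simps)
qed

definition mk2 :: "'a \<Rightarrow> 'a \<Rightarrow> 'a \<Rightarrow> 'a \<Rightarrow> 'a^2^2" where
  "mk2 a b c d = (\<chi> i j. if i = 1 then (if j = 1 then a else b) else (if j = 1 then c else d))"

lemma mk2_simps[simp]: "mk2 a b c d $1$1 = a" "mk2 a b c d $1$2 = b" "mk2 a b c d $2$1 = c" "mk2 a b c d $2$2 = d"
  by (simp_all add: mk2_def)

definition E :: "'n \<Rightarrow> 'n \<Rightarrow> 'a::field^'n^'n" where
  "E k l = (\<chi> i j. if i = k \<and> j = l then 1 else 0)"

lemma ifmult: "(if P then 1 else 0) * (x::'a::field) = (if P then x else 0)" by simp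
lemma ifmult2: "(x::'a::field) * (if P then 1 else 0) = (if P then x else 0)" by simp

lemma E_left: "(E k i ** A) $p$q = (if p = k then A$i$q else 0)"
proof -
  have "(E k i ** A) $p$q = (\<Sum>r\<in>UNIV. (if p = k \<and> r = i then A$r$q else 0))"
    by (simp add: matrix_matrix_mult_def E_def ifmult cong: if_cong)
  also have "\<dots> = (if p = k then A$i$q else 0)"
    by (cases "p = k") (simp_all add: sum.delta')
  finally show ?thesis .
qed

lemma E_right: "(A ** E j l) $p$q = (if q = l then A$p$j else 0)"
proof -
  have "(A ** E j l) $p$q = (\<Sum>r\<in>UNIV. (if r = j \<and> q = l then A$p$r else 0))"
    by (simp add: matrix_matrix_mult_def E_def ifmult2 cong: if_cong)
  also have "\<dots> = (if q = l then A$p$j else 0)"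
    by (cases "q = l") (simp_all add: sum.delta)
  finally show ?thesis .
qed

lemma E_sandwich: "E k i ** A ** E j l = msmult (A$i$j) (E k l)"
  unfolding vec_eq_iff E_right E_left by (auto simp: msmult_def E_def)

lemma msmult_msmult: "msmult c (msmult d A) = msmult (c*d) A"
  by (simp add: msmult_def vec_eq_iff)

lemma msmult_1: "msmult 1 A = A"
  by (simp add: msmult_def vec_eq_iff)

lemma all_from_E:
  assumes "msubspace M" "\<And>k l. (E k l :: 'a::field^2^2) \<in> M"
  shows "X \<in> M"
proof -
  have "X = msmult (X$1$1) (E 1 1) + msmult (X$1$2) (E 1 2) + msmult (X$2$1) (E 2 1) + msmult (X$2$2) (E 2 2)"
    by (simp add: m2_eq ent_simps E_def)
  moreover have "\<dots> \<in> M" using assms unfolding msubspace_def by meson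
  ultimately show ?thesis by simp
qed

lemma idem_exists:
  fixes s :: "'a::field"
  assumes "s \<noteq> -1" "\<not> (d1 = 0 \<and> d2 = 0)"
  shows "\<exists>e::'a^2^2. e ** e = e \<and> e \<noteq> 0 \<and> (e$2$1 - e$1$2)*d2 = (e$2$2 - s*e$1$1)*d1"
proof -
  have idem: "mk2 a b c d ** mk2 a b c d = mk2 a b c d" if "a + d = 1" "b * c = a * d" for a b c d :: 'a
  proof -
    have "a*a + b*c = a*(a+d)" "a*b+b*d = b*(a+d)" "c*a+d*c = c*(a+d)" "c*b+d*d = d*(a+d)"
      using that(2) by (simp_all add: algebra_simps)
    then have "a*a + b*c = a" "a*b+b*d = b" "c*a+d*c = c" "c*b+d*d = d"
      using that(1) by simp_all
    then show ?thesis by (simp add: m2_eq m2_mult)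
  qed
  show ?thesis
proof (cases "d1 = 0")
  case True
  show ?thesis by (rule exI[of _ "mk2 1 0 0 0"]) (simp add: idem m2_eq ent_simps True)
next
  case d1: False
  show ?thesis
  proof (cases "d2 = 0")
    case True
    have s1: "1 + s \<noteq> 0" using assms(1) by (metis add.commute add_eq_0_iff)
    have ad: "1/(1+s) + s/(1+s) = 1" using s1 by (simp add: field_simps)
    show ?thesis
      by (rule exI[of _ "mk2 (1/(1+s)) 1 (1/(1+s) * (s/(1+s))) (s/(1+s))"])
        (use s1 ad in \<open>simp add: idem m2_eq ent_simps True\<close>)
  next
    case False
    show ?thesis
      by (rule exI[of _ "mk2 1 0 (-s*d1/d2) 0"]) (use False in \<open>simp add: idem m2_eq ent_simps\<close>)
  qed
qed
qed


lemma ms_sandwich: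
  assumes "mathieu_subspace M" "e \<in> M" "e ** e = e"
  shows "P ** e ** Q \<in> M"
proof -
  have "\<forall>m\<ge>1. matpow e m \<in> M" using assms by (simp add: matpow_idem)
  then obtain N where N: "\<forall>m\<ge>N. P ** matpow e m ** Q \<in> M"
    using assms(1) unfolding mathieu_subspace_def by blast
  then have "P ** matpow e (max N 1) ** Q \<in> M" by simp
  then show ?thesis using matpow_idem[OF assms(3), of "max N 1"] by simp
qed

lemma ms_full:
  fixes e :: "'a::field^2^2"
  assumes "mathieu_subspace M" "e \<in> M" "e ** e = e" "e \<noteq> 0"
  shows "M = UNIV"
proof -
  have sub: "msubspace M" using assms(1) by (simp add: mathieu_subspace_def)
  obtain i j where ij: "e$i$j \<noteq> 0" using assms(4) by (auto simp: vec_eq_iff)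
  have "E k l \<in> M" for k l
  proof -
    have "msmult (e$i$j) (E k l) \<in> M" using ms_sandwich[OF assms(1-3)] E_sandwich by metis
    then have "msmult (1 / e$i$j) (msmult (e$i$j) (E k l)) \<in> M" using sub by (simp add: msubspace_def)
    then show ?thesis using ij by (simp add: msmult_msmult msmult_1)
  qed
  then show ?thesis using all_from_E[OF sub] by blast
qed

lemma V_max:
  fixes s :: "'a::field"
  assumes "s \<noteq> -1" "mathieu_subspace M" "M \<noteq> UNIV" "span2 (matA s) matB \<subseteq> M"
  shows "M = span2 (matA s) matB"
proof (rule ccontr)
  assume "M \<noteq> span2 (matA s) matB"
  then obtain w where w: "w \<in> M" "w \<notin> span2 (matA s) matB" using assms(4) by blast
  have sub: "msubspace M" using assms(2) by (simp add: mathieu_subspace_def)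
  define d1 where "d1 = w$2$1 - w$1$2"
  define d2 where "d2 = w$2$2 - s * w$1$1"
  have nz: "\<not> (d1 = 0 \<and> d2 = 0)" using w(2) by (auto simp: span_char d1_def d2_def)
  define W0 where "W0 = w + msmult (-(w$1$1)) (matA s) + msmult (-(w$1$2)) matB"
  have A: "matA s \<in> M" and B: "matB \<in> M" using assms(4) by (auto simp: span_char ent_simps)
  have W0M: "W0 \<in> M" unfolding W0_def using sub w(1) A B unfolding msubspace_def by meson
  have W0e: "W0$1$1 = 0" "W0$1$2 = 0" "W0$2$1 = d1" "W0$2$2 = d2"
    by (simp_all add: W0_def ent_simps d1_def d2_def)
  have inW: "X \<in> M" if hX: "(X$2$1 - X$1$2)*d2 = (X$2$2 - s*X$1$1)*d1" for X
  proof -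
    define lam where "lam = (if d1 \<noteq> 0 then (X$2$1 - X$1$2)/d1 else (X$2$2 - s*X$1$1)/d2)"
    have "lam * d1 = X$2$1 - X$1$2 \<and> lam * d2 = X$2$2 - s*X$1$1"
    proof (cases "d1 = 0")
      case True
      then have "d2 \<noteq> 0" using nz by simp
      then show ?thesis using True hX by (simp add: lam_def)
    next
      case False
      then show ?thesis using hX by (simp add: lam_def field_simps)
    qed
    then have "X = msmult (X$1$1) (matA s) + msmult (X$1$2) matB + msmult lam W0"
      by (simp add: m2_eq ent_simps W0e algebra_simps)
    moreover have "\<dots> \<in> M" using sub A B W0M unfolding msubspace_def by meson
    ultimately show ?thesis by simp
  qed
  obtain e :: "'a^2^2" where e: "e ** e = e" "e \<noteq> 0" "(e$2$1 - e$1$2)*d2 = (e$2$2 - s*e$1$1)*d1"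
    using idem_exists[OF assms(1) nz] by blast
  have "M = UNIV" using ms_full[OF assms(2) inW[OF e(3)] e(1,2)] .
  then show False using assms(3) by simp
qed


lemma mul_zero_l: "(0::'a::field^'n^'n) ** A = 0" and mul_zero_r: "A ** (0::'a::field^'n^'n) = 0"
  by (simp_all add: vec_eq_iff matrix_matrix_mult_def)

lemma ifmult3: "(if P then a else 0) * (b::'a::field) = (if P then a * b else 0)" by simp

lemma E_mid: "(A ** E j k ** B) $i$l = A$i$j * B$k$l"
proof -
  have "(A ** E j k ** B) $i$l = (\<Sum>r\<in>UNIV. (A ** E j k)$i$r * B$r$l)"
    by (simp add: matrix_matrix_mult_def)
  also have "\<dots> = (\<Sum>r\<in>UNIV. if r = k then A$i$j * B$r$l else 0)"
    by (simp add: E_right ifmult3 cong: if_cong)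
  also have "\<dots> = A$i$j * B$k$l" by simp
  finally show ?thesis .
qed

lemma idem_pair:
  fixes s :: "'a::field" and e1 e2 :: "'a^2^2"
  assumes "\<forall>t. s \<noteq> t^2" "midempotent e1" "midempotent e2" "e1 \<noteq> 0" "e2 \<noteq> 0" "e1 + e2 = mat 1"
  shows "span2 (matA s) matB \<noteq> {msmult c (msmult l1 e1 + msmult l2 e2) + e1 ** X ** e2 | c X. True}"
proof
  assume eq: "span2 (matA s) matB = {msmult c (msmult l1 e1 + msmult l2 e2) + e1 ** X ** e2 | c X. True}"
  obtain i j where ij: "e1$i$j \<noteq> 0" using assms(4) by (auto simp: vec_eq_iff)
  obtain k l where kl: "e2$k$l \<noteq> 0" using assms(5) by (auto simp: vec_eq_iff)
  define Y where "Y = e1 ** E j k ** e2"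
  have Ynz: "Y \<noteq> 0" using ij kl by (auto simp: vec_eq_iff Y_def E_mid)
  have "msmult 0 (msmult l1 e1 + msmult l2 e2) + Y = Y" by (simp add: vec_eq_iff msmult_def)
  then have YV: "Y \<in> span2 (matA s) matB" unfolding eq by (metis (mono_tags, lifting) Y_def mem_Collect_eq)
  have "e2 ** e2 + e2 ** e1 = e2" using assms(6) matrix_add_ldistrib[of e2 e2 e1]
    by (metis add.commute matrix_mul_rid)
  then have e21: "e2 ** e1 = 0" using assms(3) by (simp add: midempotent_def)
  have "Y ** Y = e1 ** E j k ** (e2 ** e1) ** E j k ** e2" by (simp add: Y_def matrix_mul_assoc)
  then have "Y ** Y = 0" by (simp add: e21 mul_zero_l mul_zero_r)
  then have "mnilpotent Y" unfolding mnilpotent_def by (metis matpow_2)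
  then show False using V_nonil[OF assms(1) YV] Ynz by simp
qed

lemma hom_facts:
  assumes "field_hom (\<phi>::'a::field \<Rightarrow> 'b::field)"
  shows "\<phi> 0 = 0" "\<phi> 1 = 1" "\<phi> x = 0 \<Longrightarrow> x = 0"
proof -
  show z: "\<phi> 0 = 0" using assms unfolding field_hom_def by (metis add_cancel_left_right add_0)
  show "\<phi> 1 = 1" using assms by (simp add: field_hom_def)
  assume h: "\<phi> x = 0"
  show "x = 0"
  proof (rule ccontr)
    assume "x \<noteq> 0"
    have m: "\<phi> (x * inverse x) = \<phi> x * \<phi> (inverse x)" using assms unfolding field_hom_def by blast
    then show False using assms h \<open>x \<noteq> 0\<close> by (simp add: field_hom_def)
  qed
qed

lemma part_L:
  fixes s :: "'a::field"
  assumes "s \<noteq> 0" "s \<noteq> -1" "field_hom (\<phi>::'a \<Rightarrow> 'b::field)" "r^2 = \<phi> s"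
  shows "(let a' = mmap \<phi> (matA s); b' = mmap \<phi> matB;
               e = msmult (1 / (1 + \<phi> s)) (a' + msmult r b')
           in e \<in> span2 a' b' \<and> e \<noteq> 0 \<and> midempotent e
              \<and> \<not> mathieu_subspace (span2 a' b'))"
proof -
  note hf = hom_facts[OF assms(3)]
  define t where "t = \<phi> s"
  have t0: "t \<noteq> 0" using hf(3) assms(1) unfolding t_def by metis
  have "\<phi> (s + 1) = t + 1" using assms(3) hf(2) by (simp add: field_hom_def t_def)
  then have t1: "1 + t \<noteq> 0" using hf(3) assms(2) by (metis add.commute add_eq_0_iff)
  have rr: "r * r = t" using assms(4) by (simp add: t_def power2_eq_square)
  have a': "mmap \<phi> (matA s) = matA t" by (simp add: m2_eq ent_simps hf t_def)
  have b': "mmap \<phi> matB = matB" by (simp add: m2_eq ent_simps hf)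
  define e where "e = msmult (1 / (1 + t)) (matA t + msmult r matB)"
  have e_ent: "e$1$1 = 1/(1+t)" "e$1$2 = r/(1+t)" "e$2$1 = r/(1+t)" "e$2$2 = t/(1+t)"
    by (simp_all add: e_def ent_simps)
  have eV: "e \<in> span2 (matA t) matB" by (simp add: span_char e_ent)
  have enz: "e \<noteq> 0" using t1 by (auto simp: m2_eq e_ent ent_simps)
  define c where "c = 1/(1+t)"
  have cc: "c * (1 + t) = 1" using t1 by (simp add: c_def)
  have ee: "e$1$1 = c" "e$1$2 = r*c" "e$2$1 = r*c" "e$2$2 = t*c" by (simp_all add: e_ent c_def)
  have "c*c + r*c*(r*c) = c*c*(1+r*r)" "c*(r*c) + r*c*(t*c) = r*c*(c*(1+t))"
       "r*c*c + t*c*(r*c) = r*c*(c*(1+t))" "r*c*(r*c) + t*c*(t*c) = t*c*(c*(1+r*r))"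
    by (simp_all add: algebra_simps rr)
  then have eid: "e ** e = e" by (simp add: m2_eq m2_mult ee rr cc)
  have nms: "\<not> mathieu_subspace (span2 (matA t) matB)"
  proof
    assume ms: "mathieu_subspace (span2 (matA t) matB)"
    have "mat 1 ** e ** E 1 1 \<in> span2 (matA t) matB" using ms_sandwich[OF ms eV eid] .
    then have "(e ** E 1 1)$1$2 = (e ** E 1 1)$2$1" by (simp add: span_char)
    then have "r/(1+t) = 0" by (simp add: E_right e_ent)
    then have "r = 0" using t1 by simp
    then show False using rr t0 by simp
  qed
  show ?thesis unfolding Let_def a' b' using eV enz eid nms
    by (simp add: e_def t_def midempotent_def)
qed


theorem mainTheorem12:
  fixes s :: "'a::field"
  assumes "s \<noteq> 0" and "s \<noteq> 1" and "s \<noteq> -1" and "\<forall>t. s \<noteq> t^2"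
  shows "maximal_mathieu_subspace (span2 (matA s) matB)
    \<and> (\<forall>v\<in>span2 (matA s) matB. mnilpotent v \<longrightarrow> v = 0)
    \<and> (\<forall>(e1::'a^2^2) e2 l1 l2. midempotent e1 \<and> midempotent e2 \<and> e1 \<noteq> 0 \<and> e2 \<noteq> 0
          \<and> e1 + e2 = mat 1 \<longrightarrow>
          span2 (matA s) matB \<noteq> {msmult c (msmult l1 e1 + msmult l2 e2) + e1 ** X ** e2 | c X. True})
    \<and> \<not> (span2 (matA s) matB \<subseteq> {A. trace A = 0})
    \<and> (\<forall>(\<phi>::'a \<Rightarrow> 'b::field) r. field_hom \<phi> \<and> r^2 = \<phi> s \<longrightarrow>
          (let a' = mmap \<phi> (matA s); b' = mmap \<phi> matB;
               e = msmult (1 / (1 + \<phi> s)) (a' + msmult r b')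
           in e \<in> span2 a' b' \<and> e \<noteq> 0 \<and> midempotent e
              \<and> \<not> mathieu_subspace (span2 a' b')))"
proof (intro conjI ballI allI impI)
  have Vne: "span2 (matA s) matB \<noteq> UNIV"
  proof
    assume "span2 (matA s) matB = UNIV"
    then have "mat 1 \<in> span2 (matA s) matB" by simp
    then show False using assms(2) by (simp add: span_char ent_simps)
  qed
  show "maximal_mathieu_subspace (span2 (matA s) matB)"
    unfolding maximal_mathieu_subspace_def
    using V_mathieu[OF assms(1,2,4)] Vne V_max[OF assms(3)] by blast
next
  fix v assume "v \<in> span2 (matA s) matB" "mnilpotent v"
  then show "v = 0" using V_nonil[OF assms(4)] by blast
next
  fix e1 e2 :: "'a^2^2" and l1 l2
  assume "midempotent e1 \<and> midempotent e2 \<and> e1 \<noteq> 0 \<and> e2 \<noteq> 0 \<and> e1 + e2 = mat 1"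
  then show "span2 (matA s) matB \<noteq> {msmult c (msmult l1 e1 + msmult l2 e2) + e1 ** X ** e2 | c X. True}"
    using idem_pair[OF assms(4)] by blast
next
  show "\<not> span2 (matA s) matB \<subseteq> {A. trace A = 0}"
  proof
    assume "span2 (matA s) matB \<subseteq> {A. trace A = 0}"
    moreover have "matA s \<in> span2 (matA s) matB" by (simp add: span_char ent_simps)
    ultimately have "trace (matA s) = 0" by blast
    then have "1 + s = 0" by (simp add: trace_def sum_2 ent_simps)
    then show False using assms(3) by (metis add.commute add_eq_0_iff)
  qed
next
  fix \<phi> :: "'a \<Rightarrow> 'b::field" and r
  assume "field_hom \<phi> \<and> r^2 = \<phi> s"
  then show "let a' = mmap \<phi> (matA s); b' = mmap \<phi> matB;
               e = msmult (1 / (1 + \<phi> s)) (a' + msmult r b')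
           in e \<in> span2 a' b' \<and> e \<noteq> 0 \<and> midempotent e
              \<and> \<not> mathieu_subspace (span2 a' b')"
    using part_L[OF assms(1,3)] by blast
qed

end
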